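(* Let $G$ be a non-empty graph on $n$ vertices. Then $G$ has a spanning subgraph $G'$ with $e(G')\geq e(G)/2$ such that, if $q$ denotes the number of copies of $C_4$ in $G'$, every edge of $G'$ belongs to at most $\frac{16\log n}{e(G')}q$ copies of $C_4$ in $G'$.
   Context: A copy of $C_4$ is a subgraph isomorphic to the $4$-cycle. $\log$ is the natural logarithm; $e(\cdot)$ denotes number of edges. *)

theory Defs
  imports Complex_Main
begin

definition simple_graph :: "'a set \<Rightarrow> 'a set set \<Rightarrow> bool" where
  "simple_graph V E \<longleftrightarrow> finite V \<and> (\<forall>e\<in>E. e \<subseteq> V \<and> card e = 2)"

text \<open>Copies of C4 in a graph with edge set E, each copy identified with its edge set
  (a copy of C4 is determined by its four edges).\<close>
definition C4_copies :: "'a set set \<Rightarrow> 'a set set set" where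
  "C4_copies E = {{{a,b},{b,c},{c,d},{d,a}} | a b c d.
      distinct [a,b,c,d] \<and> {a,b} \<in> E \<and> {b,c} \<in> E \<and> {c,d} \<in> E \<and> {d,a} \<in> E}"

end

theory Submission
  imports Defs
begin

lemma C4_mem: "C \<in> C4_copies F \<longleftrightarrow> (\<exists>a b c d. C = {{a,b},{b,c},{c,d},{d,a}} \<and>
      distinct [a,b,c,d] \<and> {a,b} \<in> F \<and> {b,c} \<in> F \<and> {c,d} \<in> F \<and> {d,a} \<in> F)"
  unfolding C4_copies_def by (rule mem_Collect_eq)

lemma C4_sub: "C4_copies F = {C \<in> C4_copies UNIV. C \<subseteq> F}"
proof (rule set_eqI)
  fix C
  show "C \<in> C4_copies F \<longleftrightarrow> C \<in> {C \<in> C4_copies UNIV. C \<subseteq> F}"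
  proof
    assume "C \<in> C4_copies F"
    then obtain a b c d where h: "C = {{a,b},{b,c},{c,d},{d,a}}"
      "distinct [a,b,c,d]" "{a,b} \<in> F" "{b,c} \<in> F" "{c,d} \<in> F" "{d,a} \<in> F"
      unfolding C4_mem by blast
    have "C \<in> C4_copies UNIV" unfolding C4_mem using h(1,2) by blast
    moreover have "C \<subseteq> F" using h by simp
    ultimately show "C \<in> {C \<in> C4_copies UNIV. C \<subseteq> F}" by simp
  next
    assume "C \<in> {C \<in> C4_copies UNIV. C \<subseteq> F}"
    hence 1: "C \<in> C4_copies UNIV" and 2: "C \<subseteq> F" by auto
    from 1 obtain a b c d where h: "C = {{a,b},{b,c},{c,d},{d,a}}" "distinct [a,b,c,d]"
      unfolding C4_mem by blast
    have "{a,b} \<in> F" "{b,c} \<in> F" "{c,d} \<in> F" "{d,a} \<in> F" using 2 h(1) by auto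
    thus "C \<in> C4_copies F" unfolding C4_mem using h by blast
  qed
qed

lemma C4_del: "C4_copies (F - {e}) = {C \<in> C4_copies F. e \<notin> C}"
proof -
  have "C4_copies (F - {e}) = {C \<in> C4_copies UNIV. C \<subseteq> F - {e}}" by (rule C4_sub)
  also have "\<dots> = {C \<in> {C \<in> C4_copies UNIV. C \<subseteq> F}. e \<notin> C}" by blast
  also have "\<dots> = {C \<in> C4_copies F. e \<notin> C}" by (simp only: C4_sub[of F, symmetric])
  finally show ?thesis .
qed

lemma C4_fin: "finite F \<Longrightarrow> finite (C4_copies F)"
proof -
  assume "finite F"
  have "C4_copies F \<subseteq> Pow F" by (subst C4_sub) blast
  thus ?thesis using \<open>finite F\<close> finite_subset by blast
qed

lemma C4_card_del:
  assumes "finite F"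
  shows "real (card (C4_copies (F - {e}))) = real (card (C4_copies F)) - real (card {C \<in> C4_copies F. e \<in> C})"
proof -
  let ?A = "{C \<in> C4_copies F. e \<in> C}" and ?B = "{C \<in> C4_copies F. e \<notin> C}"
  have f: "finite (C4_copies F)" using C4_fin[OF assms] .
  have u: "C4_copies F = ?A \<union> ?B" by auto
  have "card (?A \<union> ?B) = card ?A + card ?B"
    by (rule card_Un_disjoint) (use f in auto)
  hence "card (C4_copies F) = card ?A + card ?B" using u by metis
  thus ?thesis unfolding C4_del by simp
qed

lemma C4_card_V:
  assumes "simple_graph V E"
  shows "card (C4_copies E) \<le> card V ^ 4"
proof -
  have fin: "finite V" using assms unfolding simple_graph_def by simp
  have "C4_copies E \<subseteq> (\<lambda>(a,b,c,d). {{a,b},{b,c},{c,d},{d,a}}) ` (V \<times> V \<times> V \<times> V)"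
  proof
    fix C assume "C \<in> C4_copies E"
    then obtain a b c d where C: "C = {{a,b},{b,c},{c,d},{d,a}}" and "{a,b} \<in> E" "{c,d} \<in> E"
      unfolding C4_mem by blast
    hence "a \<in> V" "b \<in> V" "c \<in> V" "d \<in> V" using assms unfolding simple_graph_def by auto
    thus "C \<in> (\<lambda>(a,b,c,d). {{a,b},{b,c},{c,d},{d,a}}) ` (V \<times> V \<times> V \<times> V)"
      using C by (intro image_eqI[where x="(a,b,c,d)"]) auto
  qed
  hence "card (C4_copies E) \<le> card ((\<lambda>(a,b,c,d). {{a,b},{b,c},{c,d},{d,a}}) ` (V \<times> V \<times> V \<times> V))"
    using fin by (intro card_mono) auto
  also have "\<dots> \<le> card (V \<times> V \<times> V \<times> V)" by (rule card_image_le) (use fin in auto)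
  also have "\<dots> = card V ^ 4" by (simp add: card_cartesian_product power4_eq_xxxx)
  finally show ?thesis .
qed


theorem lemma2p10:
  fixes V :: "'a set" and E :: "'a set set"
  assumes "simple_graph V E" and "E \<noteq> {}"
  shows "\<exists>E' \<subseteq> E. real (card E') \<ge> real (card E) / 2 \<and>
           (\<forall>e\<in>E'. real (card {C \<in> C4_copies E'. e \<in> C})
              \<le> 16 * ln (real (card V)) / real (card E') * real (card (C4_copies E')))"
proof -
  define n where "n = card V"
  define m0 where "m0 = card E"
  define c where "c = 16 * ln (real n)"
  define q where "q = (\<lambda>F::'a set set. real (card (C4_copies F)))"
  define cnt where "cnt = (\<lambda>(F::'a set set) e. real (card {C \<in> C4_copies F. e \<in> C}))"
  define good where "good = (\<lambda>F::'a set set. \<forall>e\<in>F. cnt F e \<le> c / real (card F) * q F)"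
  have finV: "finite V" using assms(1) unfolding simple_graph_def by simp
  have EV: "E \<subseteq> Pow V" using assms(1) unfolding simple_graph_def by auto
  have finE: "finite E" using finite_subset[OF EV] finV by simp
  obtain e0 where e0: "e0 \<in> E" using assms(2) by blast
  have "card e0 = 2" "e0 \<subseteq> V" using e0 assms(1) unfolding simple_graph_def by auto
  hence n2: "n \<ge> 2" unfolding n_def using card_mono[OF finV \<open>e0 \<subseteq> V\<close>] by simp
  have lnpos: "ln (real n) > 0" using n2 by simp
  have cpos: "c > 0" unfolding c_def using lnpos by simp
  have m0pos: "m0 > 0" unfolding m0_def using card_gt_0_iff[of E] finE e0 by auto
  have cnt_le: "cnt F e \<le> q F" if "finite F" for F e
    unfolding cnt_def q_def using C4_fin[OF that] by (simp add: card_mono)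
  have q0: "q E \<le> real n ^ 4" unfolding q_def n_def using C4_card_V[OF assms(1)]
    by (metis of_nat_le_iff of_nat_power)
  show ?thesis
  proof (cases "c \<ge> real m0")
    case True
    have "good E" unfolding good_def
    proof
      fix e assume "e \<in> E"
      have "q E \<ge> 0" unfolding q_def by simp
      have "1 \<le> c / real m0" using True m0pos by simp
      hence "q E \<le> c / real m0 * q E" using \<open>q E \<ge> 0\<close> by (metis mult_1 mult_right_mono)
      thus "cnt E e \<le> c / real (card E) * q E" using cnt_le[OF finE, of e] unfolding m0_def by linarith
    qed
    thus ?thesis unfolding good_def cnt_def q_def c_def n_def by auto
  next
    case False
    define r where "r = 1 - c / real m0"
    have r0: "r \<ge> 0" unfolding r_def using False m0pos by simp
    have claim: "k \<le> m0 \<Longrightarrow> (\<exists>F\<subseteq>E. real (card F) \<ge> real m0 - real k \<and> good F)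
       \<or> (\<exists>F\<subseteq>E. card F = m0 - k \<and> q F \<le> q E * r ^ k)" for k
    proof (induction k)
      case 0
      show ?case by (intro disjI2 exI[of _ E]) (simp add: m0_def)
    next
      case (Suc k)
      hence "(\<exists>F\<subseteq>E. real (card F) \<ge> real m0 - real k \<and> good F)
       \<or> (\<exists>F\<subseteq>E. card F = m0 - k \<and> q F \<le> q E * r ^ k)" by simp
      thus ?case
      proof
        assume "\<exists>F\<subseteq>E. real (card F) \<ge> real m0 - real k \<and> good F"
        then obtain F where "F \<subseteq> E" "real (card F) \<ge> real m0 - real k" "good F" by blast
        thus ?case by (intro disjI1 exI[of _ F]) auto
      next
        assume "\<exists>F\<subseteq>E. card F = m0 - k \<and> q F \<le> q E * r ^ k"
        then obtain F where F: "F \<subseteq> E" "card F = m0 - k" "q F \<le> q E * r ^ k" by blast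
        show ?case
        proof (cases "good F")
          case True
          thus ?thesis using F Suc.prems by (intro disjI1 exI[of _ F]) auto
        next
          case False
          then obtain e where e: "e \<in> F" and bad: "cnt F e > c / real (card F) * q F"
            unfolding good_def by force
          have finF: "finite F" using finite_subset[OF F(1) finE] .
          have cardF: "card F > 0" using card_gt_0_iff[of F] e finF by auto
          have "card F \<le> m0" using card_mono[OF finE F(1)] unfolding m0_def .
          hence "c / real m0 \<le> c / real (card F)" using cardF cpos
            by (simp add: frac_le)
          hence "c / real m0 * q F \<le> c / real (card F) * q F"
            by (rule mult_right_mono) (simp add: q_def)
          hence lt: "q (F - {e}) < r * q F"
            using bad C4_card_del[OF finF, of e] unfolding q_def cnt_def r_def
            by (simp add: algebra_simps)
          also have "\<dots> \<le> r * (q E * r ^ k)" using F(3) r0 by (rule mult_left_mono)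
          also have "\<dots> = q E * r ^ Suc k" by simp
          finally have "q (F - {e}) \<le> q E * r ^ Suc k" by simp
          moreover have "card (F - {e}) = m0 - Suc k" using F(2) e finF by simp
          moreover have "F - {e} \<subseteq> E" using F(1) by blast
          ultimately show ?thesis by blast
        qed
      qed
    qed
    define k where "k = m0 div 2"
    have km: "k \<le> m0" unfolding k_def by simp
    have half: "real m0 - real k \<ge> real m0 / 2" unfolding k_def by linarith
    have m0c: "real m0 > c" using False by simp
    have "ln (1 + 1/2::real) \<ge> 1/2 - (1/2)\<^sup>2" by (rule ln_one_plus_pos_lower_bound) auto
    moreover have "ln (1 + 1/2::real) \<le> ln (real n)" using n2 by (intro ln_mono) auto
    ultimately have "ln (real n) \<ge> 1/4" by (simp add: power2_eq_square)
    hence c2: "c > 2" unfolding c_def by simp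
    have mk: "m0 \<le> 2 * k + 1" unfolding k_def by presburger
    have "m0 \<ge> 3" using m0c c2 by linarith
    hence "4 * k > m0" using mk by linarith
    hence "real (4 * k) > real m0" by (simp only: of_nat_less_iff)
    hence "4 * real k > real m0" by simp
    hence "c * (4 * real k) > c * real m0" using cpos by (rule mult_strict_left_mono)
    hence "c * real k / real m0 > c / 4" using m0pos by (simp add: field_simps)
    from this have kfrac: "c * real k / real m0 > 4 * ln (real n)" unfolding c_def by simp
    from claim[OF km] show ?thesis
    proof
      assume "\<exists>F\<subseteq>E. real (card F) \<ge> real m0 - real k \<and> good F"
      then obtain F where "F \<subseteq> E" "real (card F) \<ge> real m0 - real k" "good F" by blast
      thus ?thesis using half unfolding good_def cnt_def q_def c_def n_def m0_def by force
    next
      assume "\<exists>F\<subseteq>E. card F = m0 - k \<and> q F \<le> q E * r ^ k"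
      then obtain F where F: "F \<subseteq> E" "card F = m0 - k" "q F \<le> q E * r ^ k" by blast
      have finF: "finite F" using finite_subset[OF F(1) finE] .
      have "q F = 0"
      proof (rule ccontr)
        assume "q F \<noteq> 0"
        hence "q F \<ge> 1" unfolding q_def by simp
        have "r \<le> exp (- (c / real m0))" unfolding r_def using exp_ge_add_one_self[of "- (c / real m0)"] by simp
        hence "r ^ k \<le> exp (- (c / real m0)) ^ k" using r0 by (rule power_mono)
        also have "\<dots> = exp (- (c * real k / real m0))" by (simp add: exp_of_nat_mult[symmetric] algebra_simps)
        also have "\<dots> < exp (- (4 * ln (real n)))" using kfrac by simp
        also have "\<dots> = 1 / real n ^ 4"
        proof -
          have "ln (real n ^ 4) = 4 * ln (real n)" by (simp add: ln_realpow)
          hence "exp (4 * ln (real n)) = real n ^ 4" using n2 by (metis exp_ln of_nat_0_less_iff zero_less_power le0 less_le_trans numeral_2_eq_2 zero_less_Suc)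
          thus ?thesis by (simp add: exp_minus divide_inverse)
        qed
        finally have "q E * r ^ k < q E * (1 / real n ^ 4) \<or> q E = 0" 
          using q_def by (metis mult_strict_left_mono of_nat_0_le_iff order_le_less)
        moreover have "q E * (1 / real n ^ 4) \<le> 1" using q0 n2 by (simp add: divide_le_eq_1)
        ultimately show False using F(3) \<open>q F \<ge> 1\<close> by (smt (verit) mult_eq_0_iff)
      qed
      hence "good F" unfolding good_def using cnt_le[OF finF] by (metis mult_zero_right)
      thus ?thesis using F half unfolding good_def cnt_def q_def c_def n_def m0_def by force
    qed
  qed
qed

end
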